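(* Let $G$ be a group of isometries of the rooted tree $\mathcal T=X^*$. Then the set of pre-layered subgroups of $G$ is closed under intersections and under taking the subgroup generated by two of them (so forms a lattice), and for every word $w$ in a free group, if $H\le G$ is pre-layered then the verbal subgroup $w(H)$ is pre-layered.
   Context: $X$ is a finite alphabet with $|X|\ge2$ and $\mathcal T=X^*$ the associated rooted regular tree. For $x\in X$ and an isometry $g$, $x*g$ denotes the isometry acting as $g$ on the subtree below $x$ (i.e. $(xw)^{x*g}=xw^g$) and fixing all other vertices. A subgroup $H$ is pre-layered if $x*H\le H$ for all $x\in X$. For a word $w(X_1,\dots,X_n)$, $w(H)$ is the subgroup generated by all values $w(h_1,\dots,h_n)$, $h_i\in H$. *)

theory Defs
  imports "HOL-Algebra.Algebra"
begin

text \<open>Vertices of the rooted tree X^* are lists over the alphabet 'x (root = []).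
  An isometry of the rooted tree is a bijection of the vertex set preserving
  levels (length) and the prefix (ancestor) relation, i.e. a rooted tree automorphism.\<close>

definition tree_isometry :: "('x list \<Rightarrow> 'x list) \<Rightarrow> bool" where
  "tree_isometry g \<longleftrightarrow> bij g \<and> (\<forall>w. length (g w) = length w)
      \<and> (\<forall>n w. g (take n w) = take n (g w))"

text \<open>The full isometry group, acting on the right: w^(g h) = (w^g)^h.\<close>

definition Isom :: "('x list \<Rightarrow> 'x list) monoid" where
  "Isom = \<lparr> carrier = {g. tree_isometry g}, monoid.mult = (\<lambda>g h. h \<circ> g), one = id \<rparr>"

text \<open>x * g: acts as g below x and fixes all other vertices.\<close>

definition star :: "'x \<Rightarrow> ('x list \<Rightarrow> 'x list) \<Rightarrow> ('x list \<Rightarrow> 'x list)" where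
  "star x g = (\<lambda>v. case v of [] \<Rightarrow> [] | y # u \<Rightarrow> (if y = x then x # g u else y # u))"

definition prelayered :: "('x list \<Rightarrow> 'x list) set \<Rightarrow> bool" where
  "prelayered H \<longleftrightarrow> subgroup H (Isom :: ('x list \<Rightarrow> 'x list) monoid)
      \<and> (\<forall>x. \<forall>h\<in>H. star x h \<in> H)"

text \<open>Words in the free group on X_0, X_1, ...: lists of letters (i, e), meaning X_i if e
  is True and X_i^{-1} otherwise. Evaluation under an assignment f of group elements.\<close>

type_synonym fword = "(nat \<times> bool) list"

fun word_eval :: "('a, 'b) monoid_scheme \<Rightarrow> fword \<Rightarrow> (nat \<Rightarrow> 'a) \<Rightarrow> 'a" where
  "word_eval G [] f = \<one>\<^bsub>G\<^esub>"
| "word_eval G ((i, e) # w) f =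
     (if e then f i else inv\<^bsub>G\<^esub> (f i)) \<otimes>\<^bsub>G\<^esub> word_eval G w f"

definition verbal :: "fword \<Rightarrow> ('x list \<Rightarrow> 'x list) set \<Rightarrow> ('x list \<Rightarrow> 'x list) set" where
  "verbal w H = generate Isom {word_eval Isom w f | f. \<forall>i. f i \<in> H}"

end

theory Submission
  imports Defs
begin

lemma iso_comp: "tree_isometry g \<Longrightarrow> tree_isometry h \<Longrightarrow> tree_isometry (h \<circ> g)"
  unfolding tree_isometry_def by (auto intro: bij_comp)

lemma iso_inv: assumes "tree_isometry g" shows "tree_isometry (inv_into UNIV g)"
proof -
  have b: "bij g" and l: "\<And>w. length (g w) = length w" and t: "\<And>n w. g (take n w) = take n (g w)"
    using assms unfolding tree_isometry_def by auto
  have "length (inv_into UNIV g w) = length w" for w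
    using l[of "inv_into UNIV g w"] b by (simp add: surj_f_inv_f bij_is_surj)
  moreover have "inv_into UNIV g (take n w) = take n (inv_into UNIV g w)" for n w
  proof -
    have "g (take n (inv_into UNIV g w)) = take n w" using t[of n "inv_into UNIV g w"] b
      by (simp add: surj_f_inv_f bij_is_surj)
    thus ?thesis using b by (metis bij_is_inj inv_f_f)
  qed
  ultimately show ?thesis using b bij_imp_bij_inv unfolding tree_isometry_def by blast
qed

lemma group_Isom: "group Isom"
proof (rule groupI)
  fix x assume "x \<in> carrier Isom"
  hence "tree_isometry x" by (simp add: Isom_def)
  hence "inv_into UNIV x \<in> carrier Isom" using iso_inv[of x] by (simp add: Isom_def)
  moreover have "inv_into UNIV x \<otimes>\<^bsub>Isom\<^esub> x = \<one>\<^bsub>Isom\<^esub>"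
  proof -
    have "surj x" using \<open>tree_isometry x\<close> by (simp add: tree_isometry_def bij_is_surj)
    hence "x \<circ> inv_into UNIV x = id" by (simp add: surj_iff)
    thus ?thesis by (simp add: Isom_def)
  qed
  ultimately
  show "\<exists>y\<in>carrier Isom. y \<otimes>\<^bsub>Isom\<^esub> x = \<one>\<^bsub>Isom\<^esub>" by blast
qed (auto simp: Isom_def iso_comp tree_isometry_def bij_comp)

lemma star_comp: "star x (h \<circ> g) = star x h \<circ> star x g"
  by (rule ext) (auto simp: star_def split: list.splits)

lemma star_id: "star x id = id"
  by (rule ext) (auto simp: star_def split: list.splits)

lemma star_iso: assumes "tree_isometry g" shows "tree_isometry (star x g)"
proof -
  have b: "bij g" and l: "\<And>w. length (g w) = length w" and t: "\<And>n w. g (take n w) = take n (g w)"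
    using assms unfolding tree_isometry_def by auto
  have "star x g \<circ> star x (inv_into UNIV g) = id" "star x (inv_into UNIV g) \<circ> star x g = id"
  proof -
    have "g \<circ> inv_into UNIV g = id" "inv_into UNIV g \<circ> g = id"
      using b by (auto simp: bij_def surj_iff inj_iff)
    thus "star x g \<circ> star x (inv_into UNIV g) = id" "star x (inv_into UNIV g) \<circ> star x g = id"
      by (simp_all add: star_comp[symmetric] star_id)
  qed
  hence "bij (star x g)" using o_bij by blast
  moreover have "length (star x g w) = length w" for w
    using l by (auto simp: star_def split: list.splits)
  moreover have "star x g (take n w) = take n (star x g w)" for n w
    using t by (cases w; cases n) (auto simp: star_def)
  ultimately show ?thesis unfolding tree_isometry_def by blast
qed

lemma star_hom: "star x \<in> hom Isom Isom"
  by (rule homI) (auto simp: Isom_def star_iso star_comp)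

lemma group_hom_star: "group_hom Isom Isom (star x)"
  unfolding group_hom_def group_hom_axioms_def by (intro conjI group_Isom star_hom)

lemma gen_prelayered:
  assumes S: "S \<subseteq> carrier Isom" and cl: "\<And>x s. s \<in> S \<Longrightarrow> star x s \<in> S"
  shows "prelayered (generate Isom S)"
proof -
  interpret group Isom by (rule group_Isom)
  have "star x h \<in> generate Isom S" if "h \<in> generate Isom S" for x h
    using that
  proof induction
    case one
    have e: "\<one>\<^bsub>Isom\<^esub> = id" by (simp add: Isom_def)
    show ?case using generate.one[of Isom S] by (simp only: e star_id)
  next
    case (incl h)
    then show ?case using cl generate.incl by metis
  next
    case (inv h)
    interpret gh: group_hom Isom Isom "star x" by (rule group_hom_star)
    have "star x (inv\<^bsub>Isom\<^esub> h) = inv\<^bsub>Isom\<^esub> (star x h)" using inv S by auto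
    then show ?case using cl inv generate.inv by metis
  next
    case (eng h1 h2)
    interpret gh: group_hom Isom Isom "star x" by (rule group_hom_star)
    have "h1 \<in> carrier Isom" "h2 \<in> carrier Isom" using eng generate_in_carrier S by auto
    hence "star x (h1 \<otimes>\<^bsub>Isom\<^esub> h2) = star x h1 \<otimes>\<^bsub>Isom\<^esub> star x h2" by simp
    then show ?case using eng generate.eng by metis
  qed
  thus ?thesis unfolding prelayered_def using generate_is_subgroup S by blast
qed

lemma word_eval_carrier:
  assumes "\<And>i. f i \<in> carrier Isom"
  shows "word_eval Isom w f \<in> carrier Isom"
proof -
  interpret group Isom by (rule group_Isom)
  show ?thesis using assms by (induction w) auto
qed

lemma word_eval_star:
  assumes "\<And>i. f i \<in> carrier Isom"
  shows "star x (word_eval Isom w f) = word_eval Isom w (star x \<circ> f)"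
proof -
  interpret group Isom by (rule group_Isom)
  interpret gh: group_hom Isom Isom "star x" by (rule group_hom_star)
  show ?thesis using assms
  proof (induction w)
    case Nil
    then show ?case by simp
  next
    case (Cons a w)
    obtain i e where a: "a = (i, e)" by force
    have c: "word_eval Isom w f \<in> carrier Isom" using Cons word_eval_carrier by blast
    show ?case using Cons c a by auto
  qed
qed

theorem lemma3p3:
  fixes G :: "('x::finite list \<Rightarrow> 'x list) set"
  assumes "card (UNIV :: 'x set) \<ge> 2"
    and "subgroup G Isom"
  shows "(\<forall>\<F>. \<F> \<noteq> {} \<and> (\<forall>H\<in>\<F>. H \<subseteq> G \<and> prelayered H)
              \<longrightarrow> \<Inter>\<F> \<subseteq> G \<and> prelayered (\<Inter>\<F>))
    \<and> (\<forall>H K. H \<subseteq> G \<and> prelayered H \<and> K \<subseteq> G \<and> prelayered K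
              \<longrightarrow> generate Isom (H \<union> K) \<subseteq> G \<and> prelayered (generate Isom (H \<union> K)))
    \<and> (\<forall>w H. H \<subseteq> G \<and> prelayered H \<longrightarrow> prelayered (verbal w H))"
proof (intro conjI allI impI)
  interpret group Isom by (rule group_Isom)
  fix F :: "('x list \<Rightarrow> 'x list) set set"
  assume F: "F \<noteq> {} \<and> (\<forall>H\<in>F. H \<subseteq> G \<and> prelayered H)"
  show "\<Inter>F \<subseteq> G" using F by blast
  have "subgroup (\<Inter>F) Isom" using F subgroups_Inter unfolding prelayered_def by blast
  thus "prelayered (\<Inter>F)" using F unfolding prelayered_def by blast
next
  interpret group Isom by (rule group_Isom)
  fix H K :: "('x list \<Rightarrow> 'x list) set"
  assume A: "H \<subseteq> G \<and> prelayered H \<and> K \<subseteq> G \<and> prelayered K"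
  show "generate Isom (H \<union> K) \<subseteq> G"
    using A assms(2) generate_subgroup_incl by blast
  show "prelayered (generate Isom (H \<union> K))"
    using A by (intro gen_prelayered) (auto simp: prelayered_def dest: subgroup.subset)
next
  interpret group Isom by (rule group_Isom)
  fix w and H :: "('x list \<Rightarrow> 'x list) set"
  assume A: "H \<subseteq> G \<and> prelayered H"
  hence Hc: "H \<subseteq> carrier Isom" and Hs: "\<And>x h. h \<in> H \<Longrightarrow> star x h \<in> H"
    by (auto simp: prelayered_def dest: subgroup.subset)
  show "prelayered (verbal w H)" unfolding verbal_def
  proof (rule gen_prelayered)
    show "{word_eval Isom w f |f. \<forall>i. f i \<in> H} \<subseteq> carrier Isom"
    proof
      fix s assume "s \<in> {word_eval Isom w f |f. \<forall>i. f i \<in> H}"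
      then obtain f where s: "s = word_eval Isom w f" and f: "\<forall>i. f i \<in> H" by auto
      have "\<And>i. f i \<in> carrier Isom" using f Hc by auto
      thus "s \<in> carrier Isom" unfolding s by (rule word_eval_carrier)
    qed
    fix x s assume "s \<in> {word_eval Isom w f |f. \<forall>i. f i \<in> H}"
    then obtain f where s: "s = word_eval Isom w f" and f: "\<forall>i. f i \<in> H" by auto
    have "\<And>i. f i \<in> carrier Isom" using f Hc by auto
    hence "star x s = word_eval Isom w (star x \<circ> f)"
      unfolding s by (rule word_eval_star)
    moreover have "\<forall>i. (star x \<circ> f) i \<in> H" using f Hs by simp
    ultimately show "star x s \<in> {word_eval Isom w f |f. \<forall>i. f i \<in> H}" by auto
  qed
qed

end
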